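(* Let $X$ be a random variable uniformly distributed in $[0,1)$. For any sequence $\mathrm{a}=(a_n)_{n\ge1}$ of positive integers and any sequence $\mathrm{r}=(r_n)_{n\ge1}$ of reals in $(0,1]$, $$\Theta((\{a_nX\})_{n\ge1},\mathcal{B}(\mathrm{r}))\le 3\exp\left(4\sum_{n=1}^\infty\frac{a_n}{r_na_{n+1}}\right).$$
   Context: $\{\cdot\}$ is the fractional part, viewed as the projection $\mathbb{R}\to\mathbb{T}=\mathbb{R}/\mathbb{Z}$. For a sequence $\mathrm{X}=(X_n)$ of random points of $\mathbb{T}$ and a sequence $\mathrm{B}=(B_n)$ of Borel subsets of $\mathbb{T}$ of positive Lebesgue measure, $\theta(\mathrm{X},\mathrm{B})=\sup_{n\ge1}\frac{\mathbb{P}(X_1\in B_1,\dots,X_n\in B_n)}{\prod_{i=1}^n\mathbb{P}(X_i\in B_i)}$ and $\Theta(\mathrm{X},\mathcal{B})=\sup_{\mathrm{B}\in\mathcal{B}}\theta(\mathrm{X},\mathrm{B})$. With $q_n=\lceil1/r_n\rceil$ and $I_{n,k}$ the image of $[k/q_n,(k+1)/q_n)$ in $\mathbb{T}$ for $0\le k<q_n$, $\mathcal{B}(\mathrm{r})$ is the collection of all sequences $(I_{n,k_n})_{n\ge1}$ with integers $0\le k_n<q_n$. *)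

theory Defs
  imports "HOL-Analysis.Analysis"
begin

text \<open>The random variable X is uniform on [0,1); we realise it as the identity on
  [0,1) with Lebesgue measure, so that P(X in S) is the Lebesgue measure of [0,1) inter S.\<close>
definition unif_prob :: "real set \<Rightarrow> real" where
  "unif_prob S = measure lborel ({0..<1} \<inter> S)"

text \<open>theta(X,B) for random points X_n = Xs n (functions of the uniform variable),
  sequences indexed from 1. Values in ereal (the supremum may be infinite).\<close>
definition theta :: "(nat \<Rightarrow> real \<Rightarrow> real) \<Rightarrow> (nat \<Rightarrow> real set) \<Rightarrow> ereal" where
  "theta Xs B = (SUP n\<in>{1..}. ereal (unif_prob {x. \<forall>i\<in>{1..n}. Xs i x \<in> B i}
                                    / (\<Prod>i=1..n. unif_prob {x. Xs i x \<in> B i})))"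

definition Theta :: "(nat \<Rightarrow> real \<Rightarrow> real) \<Rightarrow> (nat \<Rightarrow> real set) set \<Rightarrow> ereal" where
  "Theta Xs Bs = (SUP B\<in>Bs. theta Xs B)"

definition qn :: "real \<Rightarrow> nat" where
  "qn r = nat \<lceil>1 / r\<rceil>"

text \<open>I_{n,k} = [k/q_n, (k+1)/q_n), a subset of [0,1) identified with its image in T.\<close>
definition cell :: "(nat \<Rightarrow> real) \<Rightarrow> nat \<Rightarrow> nat \<Rightarrow> real set" where
  "cell r n k = {real k / real (qn (r n)) ..< (real k + 1) / real (qn (r n))}"

definition Bcal :: "(nat \<Rightarrow> real) \<Rightarrow> (nat \<Rightarrow> real set) set" where
  "Bcal r = {B. \<exists>k::nat \<Rightarrow> nat. (\<forall>n\<ge>1. k n < qn (r n)) \<and> (\<forall>n\<ge>1. B n = cell r n (k n))}"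

end

theory Submission
  imports Defs
begin


lemma Ico_fmeas: "{l..<u::real} \<in> fmeasurable lborel"
proof (cases "l \<le> u")
  case True thus ?thesis by (intro fmeasurableI) (auto simp: emeasure_lborel_Ico)
next
  case False thus ?thesis by simp
qed

lemma T_meas: "{x::real. \<forall>i\<in>{k::nat..n}. frac (real (a i) * x) \<in> {(l i)..<(u i)}} \<in> sets borel"
proof -
  have "{x::real. \<forall>i\<in>{k..n}. frac (real (a i) * x) \<in> {(l i)..<(u i)}} = 
     UNIV \<inter> (\<Inter>i\<in>{k..n}. {x. frac (real (a i) * x) \<in> {(l i)..<(u i)}})" by auto
  also have "\<dots> \<in> sets borel" 
    by (cases "{k..n} = {}") (auto intro!: sets.Int sets.finite_INT simp: frac_def)
  finally show ?thesis .
qed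

lemma step_lemma:
  fixes a :: nat and \<alpha> \<beta> K c s t :: real and T :: "real set"
  assumes a: "a > 0" and ab: "0 \<le> \<alpha>" "\<alpha> < \<beta>" "\<beta> \<le> 1" and T: "T \<in> sets borel"
    and K: "K \<ge> 0" and c: "c \<ge> 0"
    and hyp: "\<And>s t. s \<le> t \<Longrightarrow> measure lborel (T \<inter> {s..<t}) \<le> K * (t - s + c)"
    and st: "s \<le> t"
  shows "measure lborel ({x. frac (real a * x) \<in> {\<alpha>..<\<beta>}} \<inter> T \<inter> {s..<t})
     \<le> (real a * (t - s) + 2) * (K * ((\<beta> - \<alpha>) / real a + c))"
proof -
  define J where "J j = {(real_of_int j + \<alpha>) / real a ..< (real_of_int j + \<beta>) / real a} \<inter> T" for j :: int
  define I where "I = {\<lfloor>real a * s\<rfloor>..\<lfloor>real a * t\<rfloor>}"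
  have ap: "real a > 0" using a by simp
  have sub: "{x. frac (real a * x) \<in> {\<alpha>..<\<beta>}} \<inter> T \<inter> {s..<t} \<subseteq> (\<Union>j\<in>I. J j)"
  proof
    fix x assume x: "x \<in> {x. frac (real a * x) \<in> {\<alpha>..<\<beta>}} \<inter> T \<inter> {s..<t}"
    define j where "j = \<lfloor>real a * x\<rfloor>"
    have e: "real a * x = real_of_int j + frac (real a * x)" unfolding j_def frac_def by simp
    have f: "\<alpha> \<le> frac (real a * x)" "frac (real a * x) < \<beta>" using x by auto
    have "(real_of_int j + \<alpha>) / real a \<le> x" using e f ap by (simp add: field_simps)
    moreover have "x < (real_of_int j + \<beta>) / real a" using e f ap by (simp add: field_simps)
    moreover have "j \<in> I" unfolding I_def j_def using x ap
      by (auto intro!: floor_mono mult_left_mono)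
    ultimately show "x \<in> (\<Union>j\<in>I. J j)" using x unfolding J_def by auto
  qed
  have fin: "finite I" unfolding I_def by simp
  have Jf: "J j \<in> fmeasurable lborel" for j
    unfolding J_def by (rule fmeasurable_Int_fmeasurable[OF Ico_fmeas]) (use T in simp)
  have "measure lborel ({x. frac (real a * x) \<in> {\<alpha>..<\<beta>}} \<inter> T \<inter> {s..<t}) \<le> measure lborel (\<Union>j\<in>I. J j)"
    apply (rule measure_mono_fmeasurable[OF sub])
    using T apply (simp add: frac_def)
    using fin Jf by (intro fmeasurable.finite_UN) auto
  also have "\<dots> \<le> (\<Sum>j\<in>I. measure lborel (J j))"
    by (rule measure_UNION_le[OF fin]) (use Jf fmeasurableD in fastforce)
  also have "\<dots> \<le> (\<Sum>j\<in>I. K * ((\<beta> - \<alpha>) / real a + c))"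
  proof (rule sum_mono)
    fix j
    have "measure lborel (J j) \<le> K * ((real_of_int j + \<beta>) / real a - (real_of_int j + \<alpha>) / real a + c)"
      unfolding J_def using hyp[of "(real_of_int j + \<alpha>) / real a" "(real_of_int j + \<beta>) / real a"] ab ap
      by (simp add: Int_commute divide_right_mono)
    also have "\<dots> = K * ((\<beta> - \<alpha>) / real a + c)" using ap by (simp add: field_simps)
    finally show "measure lborel (J j) \<le> K * ((\<beta> - \<alpha>) / real a + c)" .
  qed
  also have "\<dots> = real (card I) * (K * ((\<beta> - \<alpha>) / real a + c))" by simp
  also have "\<dots> \<le> (real a * (t - s) + 2) * (K * ((\<beta> - \<alpha>) / real a + c))"
  proof (rule mult_right_mono)
    have m: "\<lfloor>real a * s\<rfloor> \<le> \<lfloor>real a * t\<rfloor>" using st ap by (intro floor_mono) simp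
    have "real (card I) = real_of_int (\<lfloor>real a * t\<rfloor> - \<lfloor>real a * s\<rfloor> + 1)"
      unfolding I_def using m by simp
    also have "\<dots> \<le> real a * (t - s) + 2"
      using of_int_floor_le[of "real a * t"] real_of_int_floor_gt_diff_one[of "real a * s"]
      by (simp add: right_diff_distrib) linarith
    finally show "real (card I) \<le> real a * (t - s) + 2" .
    show "0 \<le> K * ((\<beta> - \<alpha>) / real a + c)" using K c ab ap by simp
  qed
  finally show ?thesis .
qed
lemma main:
  fixes a q c :: "nat \<Rightarrow> nat" and n k :: nat
  assumes apos: "\<And>i. 1 \<le> i \<Longrightarrow> a i > 0" and qpos: "\<And>i. 1 \<le> i \<Longrightarrow> q i > 0"
    and cq: "\<And>i. 1 \<le> i \<Longrightarrow> c i < q i"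
    and k1: "1 \<le> k" and kn: "k \<le> n+1"
  shows "\<forall>s t. s \<le> t \<longrightarrow> measure lborel ({x. \<forall>i\<in>{k..n}. frac (real (a i) * x)
       \<in> {real (c i) / real (q i)..<(real (c i) + 1) / real (q i)}} \<inter> {s..<t})
     \<le> (\<Prod>i=k..n. 1 + 2 * real (a i) * real (q i) / real (a (i+1))) * (t - s + 2 / real (a k))
        * (\<Prod>i=k..n. 1 / real (q i))"
  using kn k1
proof (induction k rule: inc_induct)
  case base
  show ?case using apos[of "n+1"] by simp
next
  case (step m)
  define T where "T = {x. \<forall>i\<in>{Suc m..n}. frac (real (a i) * x)
       \<in> {real (c i) / real (q i)..<(real (c i) + 1) / real (q i)}}"
  define D where "D = (\<Prod>i=Suc m..n. 1 + 2 * real (a i) * real (q i) / real (a (i+1)))"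
  define P where "P = (\<Prod>i=Suc m..n. 1 / real (q i))"
  have m1: "1 \<le> m" using step by simp
  have mn: "m \<le> n" using step by simp
  have IH: "\<And>s t. s \<le> t \<Longrightarrow> measure lborel (T \<inter> {s..<t}) \<le> (D * P) * (t - s + 2 / real (a (Suc m)))"
    using step.IH m1 unfolding T_def D_def P_def by (simp add: algebra_simps)
  have am: "real (a m) > 0" "real (a (Suc m)) > 0" using apos m1 by auto
  have qm: "real (q m) > 0" using qpos m1 by auto
  have cm: "real (c m) + 1 \<le> real (q m)" using cq[OF m1] by linarith
  have Dn: "D \<ge> 0" unfolding D_def using apos by (intro prod_nonneg) auto
  have Pn: "P \<ge> 0" unfolding P_def by (intro prod_nonneg) auto
  have Tm: "T \<in> sets borel" unfolding T_def by (rule T_meas)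
  have seteq: "{x. \<forall>i\<in>{m..n}. frac (real (a i) * x)
       \<in> {real (c i) / real (q i)..<(real (c i) + 1) / real (q i)}} =
     {x. frac (real (a m) * x) \<in> {real (c m) / real (q m)..<(real (c m) + 1) / real (q m)}} \<inter> T"
    unfolding T_def Icc_eq_insert_lb_nat[OF mn] by auto
  have pD: "(\<Prod>i=m..n. 1 + 2 * real (a i) * real (q i) / real (a (i+1))) =
      (1 + 2 * real (a m) * real (q m) / real (a (Suc m))) * D"
    unfolding D_def using mn by (simp add: prod.atLeast_Suc_atMost)
  have pP: "(\<Prod>i=m..n. 1 / real (q i)) = (1 / real (q m)) * P"
    unfolding P_def using mn by (simp add: prod.atLeast_Suc_atMost)
  show ?case
  proof (intro allI impI)
    fix s t :: real assume st: "s \<le> t"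
    have "measure lborel ({x. frac (real (a m) * x) \<in> {real (c m) / real (q m)..<(real (c m) + 1) / real (q m)}} \<inter> T \<inter> {s..<t})
      \<le> (real (a m) * (t - s) + 2) * ((D * P) * (((real (c m) + 1) / real (q m) - real (c m) / real (q m)) / real (a m) + 2 / real (a (Suc m))))"
      apply (rule step_lemma[OF _ _ _ _ Tm _ _ IH st])
      using am qm cm Dn Pn by (auto simp: divide_right_mono divide_strict_right_mono)
    also have "\<dots> = (1 + 2 * real (a m) * real (q m) / real (a (Suc m))) * D * (t - s + 2 / real (a m)) * ((1 / real (q m)) * P)"
    proof -
      have d: "((real (c m) + 1) / real (q m) - real (c m) / real (q m)) = 1 / real (q m)"
        using qm by (simp add: field_simps)
      show ?thesis unfolding d using am qm by (simp add: field_simps)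
    qed
    finally show "measure lborel ({x. \<forall>i\<in>{m..n}. frac (real (a i) * x)
       \<in> {real (c i) / real (q i)..<(real (c i) + 1) / real (q i)}} \<inter> {s..<t})
     \<le> (\<Prod>i=m..n. 1 + 2 * real (a i) * real (q i) / real (a (i+1))) * (t - s + 2 / real (a m))
        * (\<Prod>i=m..n. 1 / real (q i))"
      unfolding seteq pD pP by simp
  qed
qed
lemma lower:
  fixes a q c :: nat
  assumes a: "a > 0" and q: "q > 0" and cq: "c < q"
  shows "1 / real q \<le> measure lborel ({0..<1} \<inter> {x. frac (real a * x) \<in> {real c / real q..<(real c + 1) / real q}})"
proof -
  define K where "K j = {(real j + real c / real q) / real a ..< (real j + (real c + 1) / real q) / real a}" for j :: nat
  have ap: "real a > 0" using a by simp
  have qp: "real q > 0" using q by simp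
  have cq': "real c + 1 \<le> real q" using cq by linarith
  have le1: "(real c + 1) / real q \<le> 1" using cq' qp by simp
  have c0: "0 \<le> real c / real q" by simp
  have fl: "\<lfloor>real a * x\<rfloor> = int j" if "x \<in> K j" for x j
  proof (rule floor_unique)
    have "real j + real c / real q \<le> real a * x" "real a * x < real j + (real c + 1) / real q"
      using that ap unfolding K_def by (auto simp: field_simps)
    thus "real_of_int (int j) \<le> real a * x" "real a * x < real_of_int (int j) + 1" unfolding of_int_of_nat_eq using c0 le1 by linarith+
  qed
  have sub: "(\<Union>j\<in>{..<a}. K j) \<subseteq> {0..<1} \<inter> {x. frac (real a * x) \<in> {real c / real q..<(real c + 1) / real q}}"
  proof
    fix x assume "x \<in> (\<Union>j\<in>{..<a}. K j)"
    then obtain j where j: "j < a" "x \<in> K j" by auto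
    have b: "real j + real c / real q \<le> real a * x" "real a * x < real j + (real c + 1) / real q"
      using j ap unfolding K_def by (auto simp: field_simps)
    have fr: "frac (real a * x) = real a * x - real j" unfolding frac_def using fl[OF j(2)] by simp
    have "0 \<le> real a * x" using b c0 by linarith
    hence x0: "0 \<le> x" using ap by (simp add: zero_le_mult_iff)
    have "real a * x < real a" using b le1 j(1) by linarith
    hence "x < 1" using ap by simp
    thus "x \<in> {0..<1} \<inter> {x. frac (real a * x) \<in> {real c / real q..<(real c + 1) / real q}}"
      using x0 b fr by auto
  qed
  have Kf: "K j \<in> fmeasurable lborel" for j unfolding K_def by (rule Ico_fmeas)
  have "measure lborel (\<Union>j\<in>{..<a}. K j) = (\<Sum>j\<in>{..<a}. measure lborel (K j))"
  proof (rule measure_UNION')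
    show "pairwise (\<lambda>i j. disjnt (K i) (K j)) {..<a}"
      unfolding pairwise_def disjnt_def
    proof (intro ballI impI)
      fix i j :: nat assume "i \<noteq> j"
      show "K i \<inter> K j = {}"
      proof (rule ccontr)
        assume "K i \<inter> K j \<noteq> {}"
        then obtain x where "x \<in> K i" "x \<in> K j" by blast
        from fl[OF this(1)] fl[OF this(2)] \<open>i \<noteq> j\<close> show False by simp
      qed
    qed
  qed (use Kf in auto)
  also have "\<dots> = (\<Sum>j\<in>{..<a}. 1 / (real q * real a))"
  proof (rule sum.cong)
    fix j
    have "(real j + real c / real q) / real a \<le> (real j + (real c + 1) / real q) / real a"
      using ap qp by (simp add: divide_right_mono)
    thus "measure lborel (K j) = 1 / (real q * real a)" unfolding K_def
      using ap qp by (simp add: field_simps)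
  qed simp
  also have "\<dots> = 1 / real q" using ap by simp
  finally have eq: "measure lborel (\<Union>j\<in>{..<a}. K j) = 1 / real q" .
  have "measure lborel (\<Union>j\<in>{..<a}. K j) \<le> measure lborel ({0..<1} \<inter> {x. frac (real a * x) \<in> {real c / real q..<(real c + 1) / real q}})"
    apply (rule measure_mono_fmeasurable[OF sub])
     apply (use Kf in \<open>blast intro: fmeasurableD\<close>)
    by (rule fmeasurable_Int_fmeasurable[OF Ico_fmeas]) (simp add: frac_def)
  thus ?thesis using eq by simp
qed

lemma qn_facts:
  assumes "0 < r" "r \<le> (1::real)"
  shows "qn r > 0" "real (qn r) \<le> 2 / r"
proof -
  have g: "1 / r \<ge> 1" using assms by simp
  hence "\<lceil>1 / r\<rceil> \<ge> 1" by linarith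
  thus "qn r > 0" unfolding qn_def by simp
  have "real (qn r) = real_of_int \<lceil>1 / r\<rceil>" unfolding qn_def using \<open>\<lceil>1 / r\<rceil> \<ge> 1\<close> by simp
  also have "\<dots> \<le> 1 / r + 1" by linarith
  also have "\<dots> \<le> 2 / r" using g by simp
  finally show "real (qn r) \<le> 2 / r" .
qed

theorem proposition5p1:
  fixes a :: "nat \<Rightarrow> nat" and r :: "nat \<Rightarrow> real"
  assumes "\<And>n. n \<ge> 1 \<Longrightarrow> a n > 0"
      and "\<And>n. n \<ge> 1 \<Longrightarrow> 0 < r n \<and> r n \<le> 1"
  shows "Theta (\<lambda>n x. frac (real (a n) * x)) (Bcal r)
     \<le> (if summable (\<lambda>n. real (a (n+1)) / (r (n+1) * real (a (n+2))))
         then ereal (3 * exp (4 * (\<Sum>n. real (a (n+1)) / (r (n+1) * real (a (n+2))))))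
         else \<infinity>)"
proof (cases "summable (\<lambda>n. real (a (n+1)) / (r (n+1) * real (a (n+2))))")
  case False thus ?thesis by simp
next
  case True
  define f where "f i = real (a i) / (r i * real (a (i+1)))" for i
  define S where "S = (\<Sum>n. real (a (n+1)) / (r (n+1) * real (a (n+2))))"
  define q where "q i = qn (r i)" for i
  have apos: "\<And>i. 1 \<le> i \<Longrightarrow> a i > 0" using assms(1) by simp
  have qpos: "\<And>i. 1 \<le> i \<Longrightarrow> q i > 0" unfolding q_def using assms(2) qn_facts by blast
  have fnn: "f i \<ge> 0" if i1: "1 \<le> i" for i
  proof -
    have "0 < r i" using assms(2)[OF i1] by simp
    thus ?thesis unfolding f_def by simp
  qed
  have "Theta (\<lambda>n x. frac (real (a n) * x)) (Bcal r) \<le> ereal (3 * exp (4 * S))"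
    unfolding Theta_def
  proof (rule SUP_least)
    fix B assume "B \<in> Bcal r"
    then obtain k where k: "\<And>n. n \<ge> 1 \<Longrightarrow> k n < q n" "\<And>n. n \<ge> 1 \<Longrightarrow> B n = cell r n (k n)"
      unfolding Bcal_def q_def by blast
    show "theta (\<lambda>n x. frac (real (a n) * x)) B \<le> ereal (3 * exp (4 * S))"
      unfolding theta_def
    proof (rule SUP_least)
      fix n :: nat assume "n \<in> {1..}"
      hence n1: "1 \<le> n" by simp
      define D where "D = (\<Prod>i=1..n. 1 + 2 * real (a i) * real (q i) / real (a (i+1)))"
      define P where "P = (\<Prod>i=1..n. 1 / real (q i))"
      define T where "T = {x. \<forall>i\<in>{1..n}. frac (real (a i) * x)
          \<in> {real (k i) / real (q i)..<(real (k i) + 1) / real (q i)}}"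
      have Bc: "\<And>i. i \<ge> 1 \<Longrightarrow> B i = {real (k i) / real (q i)..<(real (k i) + 1) / real (q i)}"
        using k(2) unfolding cell_def q_def by simp
      have numeq: "unif_prob {x. \<forall>i\<in>{1..n}. frac (real (a i) * x) \<in> B i} = measure lborel (T \<inter> {0..<1})"
        unfolding unif_prob_def T_def using Bc by (simp add: Int_commute)
      have num: "measure lborel (T \<inter> {0..<1}) \<le> D * (1 - 0 + 2 / real (a 1)) * P"
        using main[of a q k 1 n, OF apos qpos k(1) order_refl, rule_format, of 0 1] n1 unfolding T_def D_def P_def by simp
      have Dnn: "D \<ge> 0" unfolding D_def by (intro prod_nonneg) auto
      have Ppos: "P > 0" unfolding P_def using qpos by (intro prod_pos) auto
      have "real (a 1) \<ge> 1" using apos[of 1] by simp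
      hence "2 / real (a 1) \<le> 2 / 1" by (intro divide_left_mono) auto
      hence "1 - 0 + 2 / real (a 1) \<le> 3" by simp
      hence num3: "unif_prob {x. \<forall>i\<in>{1..n}. frac (real (a i) * x) \<in> B i} \<le> 3 * D * P"
      proof -
        have "D * (1 - 0 + 2 / real (a 1)) * P \<le> D * 3 * P"
          using \<open>1 - 0 + 2 / real (a 1) \<le> 3\<close> Dnn Ppos by (intro mult_right_mono mult_left_mono) auto
        thus ?thesis using num numeq by simp
      qed
      have den: "P \<le> (\<Prod>i=1..n. unif_prob {x. frac (real (a i) * x) \<in> B i})"
        unfolding P_def
      proof (rule prod_mono)
        fix i assume "i \<in> {1..n}"
        hence i1: "1 \<le> i" by simp
        show "0 \<le> 1 / real (q i) \<and> 1 / real (q i) \<le> unif_prob {x. frac (real (a i) * x) \<in> B i}"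
          unfolding unif_prob_def Bc[OF i1] using lower[OF apos[OF i1] qpos[OF i1] k(1)[OF i1]] by simp
      qed
      have "D \<le> (\<Prod>i=1..n. exp (4 * f i))"
        unfolding D_def
      proof (rule prod_mono)
        fix i assume "i \<in> {1..n}"
        hence i1: "1 \<le> i" by simp
        have r: "0 < r i" "r i \<le> 1" using assms(2)[OF i1] by auto
        have qr: "real (q i) \<le> 2 / r i" unfolding q_def using qn_facts(2)[OF r] .
        have a1: "real (a (i+1)) > 0" using apos[of "i+1"] by simp
        have ai: "real (a i) \<ge> 0" by simp
        have "2 * real (a i) * real (q i) / real (a (i+1)) \<le> 2 * real (a i) * (2 / r i) / real (a (i+1))"
          using qr ai a1 by (intro divide_right_mono mult_left_mono) auto
        also have "\<dots> = 4 * f i" unfolding f_def using r a1 by (simp add: field_simps)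
        finally have "1 + 2 * real (a i) * real (q i) / real (a (i+1)) \<le> exp (4 * f i)"
          using exp_ge_add_one_self[of "4 * f i"] by linarith
        moreover have "0 \<le> 1 + 2 * real (a i) * real (q i) / real (a (i+1))" by simp
        ultimately show "0 \<le> 1 + 2 * real (a i) * real (q i) / real (a (i+1)) \<and>
             1 + 2 * real (a i) * real (q i) / real (a (i+1)) \<le> exp (4 * f i)" by simp
      qed
      also have "\<dots> = exp (4 * (\<Sum>i=1..n. f i))" by (simp add: exp_sum sum_distrib_left)
      also have "\<dots> \<le> exp (4 * S)"
      proof -
        have "(\<Sum>i=1..n. f i) = (\<Sum>j<n. f (Suc j))" by (simp add: sum.atLeast1_atMost_eq)
        also have "\<dots> \<le> S" unfolding S_def
          using sum_le_suminf[OF True, of "{..<n}"] fnn unfolding f_def by (simp add: add.commute)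
        finally show ?thesis by simp
      qed
      finally have DS: "D \<le> exp (4 * S)" .
      have denpos: "(\<Prod>i=1..n. unif_prob {x. frac (real (a i) * x) \<in> B i}) > 0" using den Ppos by linarith
      have "unif_prob {x. \<forall>i\<in>{1..n}. frac (real (a i) * x) \<in> B i} \<le> 3 * D * (\<Prod>i=1..n. unif_prob {x. frac (real (a i) * x) \<in> B i})"
      proof -
        have "3 * D * P \<le> 3 * D * (\<Prod>i=1..n. unif_prob {x. frac (real (a i) * x) \<in> B i})"
          using den Dnn by (intro mult_left_mono) auto
        thus ?thesis using num3 by linarith
      qed
      hence "unif_prob {x. \<forall>i\<in>{1..n}. frac (real (a i) * x) \<in> B i} / (\<Prod>i=1..n. unif_prob {x. frac (real (a i) * x) \<in> B i}) \<le> 3 * D"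
        using denpos by (simp add: pos_divide_le_eq)
      also have "\<dots> \<le> 3 * exp (4 * S)" using DS by simp
      finally show "ereal (unif_prob {x. \<forall>i\<in>{1..n}. frac (real (a i) * x) \<in> B i} /
              (\<Prod>i = 1..n. unif_prob {x. frac (real (a i) * x) \<in> B i})) \<le> ereal (3 * exp (4 * S))"
        by simp
    qed
  qed
  thus ?thesis using True unfolding S_def by simp
qed

end
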